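(* Let $d\ge 1$ and $\vec\gamma=(\gamma_1,\dots,\gamma_d)\in\mathbb{Z}^d$. Let $g\colon\mathbb{C}\to\mathbb{C}$ be holomorphic with a simple zero $\alpha\neq 0$, with expansion $g(z)=\sum_{k\ge 1}c_k(z-\alpha)^k$, $c_1\neq 0$; fix a point of $L$ over $\alpha$, also denoted $\alpha$. For $\vec a\in\mathbb{C}^d$ let $f(z;\vec a)=g(z)+\sum_{i=1}^d a_i z^{\gamma_i}$ for $z\in L$. Suppose that for some neighborhood $U\subset\mathbb{C}^d$ of $\vec 0$ there is a smooth map $\phi\colon U\to L$ with $f(\phi(\vec a);\vec a)=0$ for all $\vec a\in U$ and $\phi(\vec 0)=\alpha$. Then for every $\vec n=(n_1,\dots,n_d)\in\mathbb{Z}_{\ge0}^d$ with $\Sigma\vec n:=\sum_i n_i\ge 1$, \[ \frac{\partial(\phi,\vec n)}{\prod_{i=1}^d n_i!}\in \alpha^{\vec n\cdot\vec\gamma}\,\mathbb{Z}\big[\alpha^{-1},c_1^{-1},c_2,c_3,\dots,c_{\Sigma\vec n}\big], \] i.e. it equals $\alpha^{\vec n\cdot\vec\gamma}$ times a polynomial with integer coefficients in $\alpha^{-1},c_1^{-1},c_2,\dots,c_{\Sigma\vec n}$, where $\partial(\phi,\vec n)=\prod_{i=1}^d\big(\frac{\partial}{\partial a_i}\big)^{n_i}\phi(\vec a)\big|_{\vec a=\vec 0}$ and $\vec n\cdot\vec\gamma=\sum_i n_i\gamma_i$.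
   Context: $L$ is the Riemann surface of the logarithm, parametrized by triples $(r,\theta,n)$ with $r>0$, $\theta\in(-\pi,\pi]$, $n\in\mathbb{Z}$; for $z=(r,\theta,n)\in L$ and $\gamma\in\mathbb{C}$, $z^\gamma=e^{\gamma\ln r+i\gamma\theta+2\pi i n\gamma}$. $g(z)$ for $z\in L$ near $\alpha$ means $g(z^1)$, and derivatives of $\phi$ are taken in the local complex coordinate $z\mapsto z^1$ near $\alpha$. *)

theory Defs
  imports "HOL-Analysis.Analysis"
begin

definition cpartial :: "'d::finite \<Rightarrow> (complex^'d \<Rightarrow> complex) \<Rightarrow> complex^'d \<Rightarrow> complex" where
  "cpartial i f a = deriv (\<lambda>z. f (\<chi> j. if j = i then z else a $ j)) (a $ i)"

definition mixed_partial :: "nat^'d::finite \<Rightarrow> (complex^'d \<Rightarrow> complex) \<Rightarrow> complex^'d \<Rightarrow> complex" where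
  "mixed_partial n f = foldr (\<lambda>i h. (cpartial i ^^ (n $ i)) h)
      (SOME xs. set xs = (UNIV :: 'd set) \<and> distinct xs) f"

definition cholomorphic_on :: "(complex^'d::finite \<Rightarrow> complex) \<Rightarrow> (complex^'d) set \<Rightarrow> bool" where
  "cholomorphic_on f U \<longleftrightarrow> (\<forall>a\<in>U. \<exists>D. (f has_derivative D) (at a) \<and>
       (\<forall>c x. D (c *s x) = c * D x))"

text \<open>Values at x(0),...,x(N) of polynomials with integer coefficients in N+1 variables,
  i.e. the ring Z[x 0, ..., x N].\<close>
definition int_poly_vals :: "nat \<Rightarrow> (nat \<Rightarrow> complex) \<Rightarrow> complex set" where
  "int_poly_vals N x = {z. \<exists>(M :: (nat \<Rightarrow> nat) set) (coef :: (nat \<Rightarrow> nat) \<Rightarrow> int).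
      finite M \<and> z = (\<Sum>m\<in>M. of_int (coef m) * (\<Prod>j\<le>N. x j ^ m j))}"

end

theory Submission
  imports Defs "HOL-Complex_Analysis.Complex_Analysis"
begin

lemma ipv_term: "of_int c * (\<Prod>j\<le>N. x j ^ m j) \<in> int_poly_vals N x"
  unfolding int_poly_vals_def by (rule CollectI, rule exI[of _ "{m}"], rule exI[of _ "\<lambda>_. c"]) simp

lemma ipv_add:
  assumes "p \<in> int_poly_vals N x" "q \<in> int_poly_vals N x"
  shows "p + q \<in> int_poly_vals N x"
proof -
  obtain M1 c1 where 1: "finite M1" "p = (\<Sum>m\<in>M1. of_int (c1 m) * (\<Prod>j\<le>N. x j ^ m j))"
    using assms(1) unfolding int_poly_vals_def by blast
  obtain M2 c2 where 2: "finite M2" "q = (\<Sum>m\<in>M2. of_int (c2 m) * (\<Prod>j\<le>N. x j ^ m j))"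
    using assms(2) unfolding int_poly_vals_def by blast
  define c where "c m = (if m \<in> M1 then c1 m else 0) + (if m \<in> M2 then c2 m else 0)" for m
  have e1: "p = (\<Sum>m\<in>M1 \<union> M2. of_int (if m \<in> M1 then c1 m else 0) * (\<Prod>j\<le>N. x j ^ m j))"
    unfolding 1 using 1(1) 2(1) by (intro sum.mono_neutral_cong_left) auto
  have e2: "q = (\<Sum>m\<in>M1 \<union> M2. of_int (if m \<in> M2 then c2 m else 0) * (\<Prod>j\<le>N. x j ^ m j))"
    unfolding 2 using 1(1) 2(1) by (intro sum.mono_neutral_cong_left) auto
  have "p + q = (\<Sum>m\<in>M1 \<union> M2. of_int (c m) * (\<Prod>j\<le>N. x j ^ m j))"
    unfolding e1 e2 c_def by (simp add: sum.distrib[symmetric] distrib_right)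
  thus ?thesis unfolding int_poly_vals_def using 1(1) 2(1) by blast
qed

lemma ipv_sum:
  assumes "finite I" "\<And>i. i \<in> I \<Longrightarrow> t i \<in> int_poly_vals N x"
  shows "sum t I \<in> int_poly_vals N x"
  using assms
proof (induction I rule: finite_induct)
  case empty
  then show ?case using ipv_term[where c=0 and N=N and x=x and m="\<lambda>_. 0"] by simp
next
  case (insert a F)
  then show ?case by (simp add: ipv_add)
qed

lemma ipv_mult:
  assumes "p \<in> int_poly_vals N x" "q \<in> int_poly_vals N x"
  shows "p * q \<in> int_poly_vals N x"
proof -
  obtain M1 c1 where 1: "finite M1" "p = (\<Sum>m\<in>M1. of_int (c1 m) * (\<Prod>j\<le>N. x j ^ m j))"
    using assms(1) unfolding int_poly_vals_def by blast
  obtain M2 c2 where 2: "finite M2" "q = (\<Sum>m\<in>M2. of_int (c2 m) * (\<Prod>j\<le>N. x j ^ m j))"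
    using assms(2) unfolding int_poly_vals_def by blast
  have "p * q = (\<Sum>m1\<in>M1. \<Sum>m2\<in>M2. of_int (c1 m1 * c2 m2) * (\<Prod>j\<le>N. x j ^ (m1 j + m2 j)))"
    unfolding 1 2 sum_distrib_right sum_distrib_left
    by (subst sum.swap) (simp add: power_add prod.distrib algebra_simps)
  also have "\<dots> \<in> int_poly_vals N x"
    using 1(1) 2(1) by (intro ipv_sum ipv_term) auto
  finally show ?thesis .
qed

lemma ipv_const: "of_int c \<in> int_poly_vals N x"
  using ipv_term[where c=c and N=N and x=x and m="\<lambda>_. 0"] by simp

lemma ipv_var: assumes "k \<le> N" shows "x k \<in> int_poly_vals N x"
proof -
  have "(\<Prod>j\<le>N. x j ^ (if j = k then 1 else 0)) = x k"
    using assms by (simp add: prod.delta' if_distrib[of "\<lambda>e. x _ ^ e"] cong: if_cong)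
  then show ?thesis using ipv_term[where c=1 and N=N and x=x and m="\<lambda>j. if j = k then 1 else 0"] by simp
qed


definition upd :: "complex^'d::finite \<Rightarrow> 'd \<Rightarrow> complex \<Rightarrow> complex^'d" where
  "upd a i z = (\<chi> j. if j = i then z else a $ j)"

lemma upd_nth [simp]: "upd a i z $ j = (if j = i then z else a $ j)"
  by (simp add: upd_def)

lemma upd_same [simp]: "upd a i (a $ i) = a"
  by (simp add: upd_def vec_eq_iff)

lemma upd_upd [simp]: "upd (upd a i z) i z' = upd a i z'"
  by (simp add: upd_def vec_eq_iff)

lemma cpartial_pow: "(cpartial i ^^ k) f a = (deriv ^^ k) (\<lambda>z. f (upd a i z)) (a $ i)"
proof (induction k arbitrary: f a)
  case 0
  then show ?case by simp
next
  case (Suc k)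
  have "(cpartial i ^^ Suc k) f a = cpartial i ((cpartial i ^^ k) f) a" by simp
  also have "\<dots> = deriv (\<lambda>z. (cpartial i ^^ k) f (upd a i z)) (a $ i)"
    by (simp add: cpartial_def upd_def)
  also have "(\<lambda>z. (cpartial i ^^ k) f (upd a i z)) = (\<lambda>z. (deriv ^^ k) (\<lambda>z. f (upd a i z)) z)"
    by (simp add: Suc)
  finally show ?case by (simp add: o_def)
qed

definition hdv :: "'d::finite \<Rightarrow> nat \<Rightarrow> (complex^'d \<Rightarrow> complex) \<Rightarrow> complex^'d \<Rightarrow> complex" where
  "hdv i k f a = fps_nth (fps_expansion (\<lambda>z. f (upd a i z)) (a $ i)) k"

lemma hd_eq: "hdv i k f a = (deriv ^^ k) (\<lambda>z. f (upd a i z)) (a $ i) / fact k"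
  by (simp add: hdv_def fps_expansion_def)

lemma cpartial_pow_hd: "(cpartial i ^^ k) f a = fact k * hdv i k f a"
  by (simp add: hd_eq cpartial_pow)

lemma hd_0 [simp]: "hdv i 0 f a = f a"
  by (simp add: hd_eq)

lemma fpsexp_add:
  assumes "f analytic_on {z}" "g analytic_on {z}"
  shows "fps_expansion (\<lambda>x. f x + g x) z = fps_expansion f z + fps_expansion g z"
proof -
  have "(\<lambda>x. f (z + x) + g (z + x)) has_fps_expansion fps_expansion f z + fps_expansion g z"
    using assms by (intro has_fps_expansion_add analytic_at_imp_has_fps_expansion)
  moreover have "(\<lambda>x. f (z + x) + g (z + x)) has_fps_expansion fps_expansion (\<lambda>x. f x + g x) z"
    using analytic_at_imp_has_fps_expansion[of "\<lambda>x. f x + g x" z] assms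
    by (simp add: analytic_on_add)
  ultimately show ?thesis using fps_expansion_unique_complex by metis
qed

lemma fpsexp_mult:
  assumes "f analytic_on {z}" "g analytic_on {z}"
  shows "fps_expansion (\<lambda>x. f x * g x) z = fps_expansion f z * fps_expansion g z"
proof -
  have "(\<lambda>x. f (z + x) * g (z + x)) has_fps_expansion fps_expansion f z * fps_expansion g z"
    using assms by (intro has_fps_expansion_mult analytic_at_imp_has_fps_expansion)
  moreover have "(\<lambda>x. f (z + x) * g (z + x)) has_fps_expansion fps_expansion (\<lambda>x. f x * g x) z"
    using analytic_at_imp_has_fps_expansion[of "\<lambda>x. f x * g x" z] assms
    by (simp add: analytic_on_mult)
  ultimately show ?thesis using fps_expansion_unique_complex by metis
qed

lemma fpsexp_nth0: "fps_expansion f z $ 0 = f z"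
  by (simp add: fps_expansion_def)

lemma fpsexp_comp:
  assumes s: "s analytic_on {z}" and h: "h analytic_on {s z}"
  shows "fps_expansion (\<lambda>x. h (s x)) z = fps_expansion h (s z) oo (fps_expansion s z - fps_const (s z))"
proof -
  have 1: "(\<lambda>y. h (s z + y)) has_fps_expansion fps_expansion h (s z)"
    using h by (rule analytic_at_imp_has_fps_expansion)
  have 2: "(\<lambda>x. s (z + x) - s z) has_fps_expansion (fps_expansion s z - fps_const (s z))"
    using s by (intro has_fps_expansion_diff analytic_at_imp_has_fps_expansion has_fps_expansion_const)
  have 3: "fps_nth (fps_expansion s z - fps_const (s z)) 0 = 0"
    by (simp add: fpsexp_nth0)
  have "((\<lambda>y. h (s z + y)) \<circ> (\<lambda>x. s (z + x) - s z)) has_fps_expansion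
          (fps_expansion h (s z) oo (fps_expansion s z - fps_const (s z)))"
    by (rule has_fps_expansion_compose[OF 1 2 3])
  hence "(\<lambda>x. h (s (z + x))) has_fps_expansion
          (fps_expansion h (s z) oo (fps_expansion s z - fps_const (s z)))"
    by (simp add: o_def)
  moreover have "(\<lambda>x. h (s (z + x))) has_fps_expansion fps_expansion (\<lambda>x. h (s x)) z"
    using analytic_at_imp_has_fps_expansion[of "\<lambda>x. h (s x)" z] 
      analytic_on_compose_gen[OF s h, unfolded o_def] by auto
  ultimately show ?thesis using fps_expansion_unique_complex by metis
qed


definition SA :: "(complex^'d::finite \<Rightarrow> complex) \<Rightarrow> complex^'d \<Rightarrow> 'd \<Rightarrow> bool" where
  "SA f a i \<longleftrightarrow> (\<lambda>z. f (upd a i z)) analytic_on {a $ i}"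

definition Gs :: "(complex^'d::finite \<Rightarrow> complex) \<Rightarrow> 'd \<Rightarrow> complex^'d \<Rightarrow> complex fps" where
  "Gs s i a = fps_expansion (\<lambda>z. s (upd a i z)) (a $ i) - fps_const (s a)"

lemma Gs_nth: "Gs s i a $ j = (if j = 0 then 0 else hdv i j s a)"
  by (simp add: Gs_def hdv_def fpsexp_nth0)

lemma hd_add:
  assumes "SA f a i" "SA g a i"
  shows "hdv i k (\<lambda>b. f b + g b) a = hdv i k f a + hdv i k g a"
  using fpsexp_add[OF assms[unfolded SA_def]] by (simp add: hdv_def)

lemma hd_mult:
  assumes "SA f a i" "SA g a i"
  shows "hdv i k (\<lambda>b. f b * g b) a = (\<Sum>l=0..k. hdv i l f a * hdv i (k - l) g a)"
  using fpsexp_mult[OF assms[unfolded SA_def]] by (simp add: hdv_def fps_mult_nth)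

lemma SA_add: "SA f a i \<Longrightarrow> SA g a i \<Longrightarrow> SA (\<lambda>b. f b + g b) a i"
  unfolding SA_def by (rule analytic_on_add)

lemma SA_mult: "SA f a i \<Longrightarrow> SA g a i \<Longrightarrow> SA (\<lambda>b. f b * g b) a i"
  unfolding SA_def by (rule analytic_on_mult)

lemma SA_const: "SA (\<lambda>b. c) a i"
  unfolding SA_def by simp

lemma SA_sum: "finite J \<Longrightarrow> (\<And>j. j \<in> J \<Longrightarrow> SA (f j) a i) \<Longrightarrow> SA (\<lambda>b. \<Sum>j\<in>J. f j b) a i"
  by (induction J rule: finite_induct) (auto intro: SA_add SA_const)

lemma hd_sum:
  assumes "finite J" "\<And>j. j \<in> J \<Longrightarrow> SA (f j) a i"
  shows "hdv i k (\<lambda>b. \<Sum>j\<in>J. f j b) a = (\<Sum>j\<in>J. hdv i k (f j) a)"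
  using assms
proof (induction J rule: finite_induct)
  case empty
  then show ?case by (simp add: hd_eq)
next
  case (insert x F)
  have "hdv i k (\<lambda>b. \<Sum>j\<in>insert x F. f j b) a = hdv i k (\<lambda>b. f x b + (\<Sum>j\<in>F. f j b)) a"
    using insert by simp
  also have "\<dots> = hdv i k (f x) a + hdv i k (\<lambda>b. \<Sum>j\<in>F. f j b) a"
    using insert by (intro hd_add SA_sum) auto
  finally show ?case using insert by simp
qed

lemma hd_const: "hdv i k (\<lambda>b. c) a = (if k = 0 then c else 0)"
  by (simp add: hd_eq)

lemma hd_coord: "hdv i k (\<lambda>b. b $ j) a = (if k = 0 then a $ j else if k = 1 \<and> j = i then 1 else 0)"
  by (cases "j = i") (simp_all add: hd_eq)

lemma SA_coord: "SA (\<lambda>b. b $ j) a i"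
  unfolding SA_def by (cases "j = i") (simp_all add: analytic_on_ident)

lemma hd_comp:
  assumes "SA s a i" "h analytic_on {s a}"
  shows "hdv i k (\<lambda>b. h (s b)) a = (\<Sum>r=0..k. fps_expansion h (s a) $ r * (Gs s i a ^ r) $ k)"
  using fpsexp_comp[OF assms(1)[unfolded SA_def], of h] assms(2)
  by (simp add: hdv_def Gs_def fps_compose_nth)

lemma SA_comp: "SA s a i \<Longrightarrow> h analytic_on {s a} \<Longrightarrow> SA (\<lambda>b. h (s b)) a i"
  unfolding SA_def using analytic_on_compose_gen[of "\<lambda>z. s (upd a i z)" "{a $ i}" h "{s a}"]
  by (simp add: o_def)

lemma continuous_upd: "continuous_on UNIV (upd a i)"
  unfolding upd_def
proof (intro continuous_intros)
  fix j show "continuous_on UNIV (\<lambda>x. if j = i then x else a $ j)"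
    by (cases "j = i") (simp_all add: continuous_on_id continuous_on_const)
qed

lemma open_upd_vimage: "open W \<Longrightarrow> open {z. upd a i z \<in> W}"
  using continuous_upd[of a i] open_vimage[of W "upd a i"] by (simp add: vimage_def)

lemma hd_cong:
  assumes "open W" "a \<in> W" "\<And>b. b \<in> W \<Longrightarrow> f b = f' b"
  shows "hdv i k f a = hdv i k f' a"
proof -
  have "\<forall>\<^sub>F z in nhds (a $ i). upd a i z \<in> W"
    using eventually_nhds_in_open[OF open_upd_vimage[OF assms(1), of a i], of "a $ i"] assms by auto
  hence "\<forall>\<^sub>F z in nhds (a $ i). f (upd a i z) = f' (upd a i z)"
    by eventually_elim (use assms in auto)
  thus ?thesis unfolding hdv_def by (subst fps_expansion_cong) auto
qed


definition Qf :: "int \<Rightarrow> (complex \<Rightarrow> complex fps) \<Rightarrow> bool" where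
  "Qf e \<Phi> \<longleftrightarrow> (\<forall>r. \<exists>c::int. \<forall>u. u \<noteq> 0 \<longrightarrow> \<Phi> u $ r = of_int c * u powi (e - int r))"

lemma Qf_one: "Qf 0 (\<lambda>_. 1)"
  unfolding Qf_def
proof
  fix r show "\<exists>c::int. \<forall>u. u \<noteq> 0 \<longrightarrow> (1::complex fps) $ r = of_int c * u powi (0 - int r)"
    by (rule exI[of _ "if r = 0 then 1 else 0"]) auto
qed

lemma Qf_mult:
  assumes "Qf e1 \<Phi>1" "Qf e2 \<Phi>2"
  shows "Qf (e1 + e2) (\<lambda>u. \<Phi>1 u * \<Phi>2 u)"
proof -
  obtain c1 where c1: "\<And>r u. u \<noteq> 0 \<Longrightarrow> \<Phi>1 u $ r = of_int (c1 r) * u powi (e1 - int r)"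
    using assms(1) unfolding Qf_def by metis
  obtain c2 where c2: "\<And>r u. u \<noteq> 0 \<Longrightarrow> \<Phi>2 u $ r = of_int (c2 r) * u powi (e2 - int r)"
    using assms(2) unfolding Qf_def by metis
  show ?thesis unfolding Qf_def
  proof
    fix r
    show "\<exists>c::int. \<forall>u. u \<noteq> 0 \<longrightarrow> (\<Phi>1 u * \<Phi>2 u) $ r = of_int c * u powi (e1 + e2 - int r)"
    proof (rule exI[of _ "\<Sum>l=0..r. c1 l * c2 (r - l)"], intro allI impI)
      fix u :: complex assume u: "u \<noteq> 0"
      have "(\<Phi>1 u * \<Phi>2 u) $ r = (\<Sum>l=0..r. of_int (c1 l) * u powi (e1 - int l) * (of_int (c2 (r - l)) * u powi (e2 - int (r - l))))"
        by (simp add: fps_mult_nth c1[OF u] c2[OF u])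
      also have "\<dots> = (\<Sum>l=0..r. of_int (c1 l * c2 (r - l)) * u powi (e1 + e2 - int r))"
      proof (rule sum.cong)
        fix l assume "l \<in> {0..r}"
        hence "e1 - int l + (e2 - int (r - l)) = e1 + e2 - int r" by auto
        note ex = this
        have "u powi (e1 - int l) * u powi (e2 - int (r - l)) = u powi (e1 - int l + (e2 - int (r - l)))"
          by (rule power_int_add[symmetric]) (use u in simp)
        hence "u powi (e1 - int l) * u powi (e2 - int (r - l)) = u powi (e1 + e2 - int r)"
          unfolding ex .
        thus "of_int (c1 l) * u powi (e1 - int l) * (of_int (c2 (r - l)) * u powi (e2 - int (r - l))) =
              of_int (c1 l * c2 (r - l)) * u powi (e1 + e2 - int r)"
          by (simp only: of_int_mult mult_ac)
      qed simp
      also have "\<dots> = of_int (\<Sum>l=0..r. c1 l * c2 (r - l)) * u powi (e1 + e2 - int r)"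
        by (simp add: sum_distrib_right)
      finally show "(\<Phi>1 u * \<Phi>2 u) $ r = of_int (\<Sum>l=0..r. c1 l * c2 (r - l)) * u powi (e1 + e2 - int r)" .
    qed
  qed
qed

lemma Qf_power: "Qf e \<Phi> \<Longrightarrow> Qf (int n * e) (\<lambda>u. \<Phi> u ^ n)"
proof (induction n)
  case 0
  then show ?case using Qf_one by simp
next
  case (Suc n)
  have "Qf (e + int n * e) (\<lambda>u. \<Phi> u * \<Phi> u ^ n)"
    using Suc by (intro Qf_mult) auto
  then show ?case by (simp add: algebra_simps)
qed

lemma Qf_lin: "Qf 1 (\<lambda>u. fps_const u + fps_X)"
  unfolding Qf_def
proof
  fix r
  show "\<exists>c::int. \<forall>u::complex. u \<noteq> 0 \<longrightarrow> (fps_const u + fps_X) $ r = of_int c * u powi (1 - int r)"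
    by (rule exI[of _ "if r \<le> 1 then 1 else 0"]) (auto simp: fps_X_def le_Suc_eq)
qed

lemma inv_lin:
  fixes u :: complex
  assumes u: "u \<noteq> 0"
  shows "inverse (fps_const u + fps_X) = Abs_fps (\<lambda>r. (-1) ^ r * u powi (- 1 - int r))"
proof (rule fps_inverse_unique)
  show "(fps_const u + fps_X) * (Abs_fps :: (nat \<Rightarrow> complex) \<Rightarrow> complex fps) (\<lambda>r. (- 1) ^ r * u powi (- 1 - int r)) = 1"
  proof (rule fps_ext)
    fix n
    show "((fps_const u + fps_X) * Abs_fps (\<lambda>r. (- 1) ^ r * u powi (- 1 - int r))) $ n = (1::complex fps) $ n"
    proof (cases n)
      case 0
      then show ?thesis using u by (simp add: distrib_right power_int_minus)
    next
      case (Suc m)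
      have "u * u powi (- 1 - int (Suc m)) = u powi (- 1 - int m)"
        using u by (simp add: power_int_diff power_int_minus field_simps power2_eq_square)
      hence "u * ((- 1) ^ Suc m * u powi (- 1 - int (Suc m))) + (- 1) ^ m * u powi (- 1 - int m) = 0"
        by simp
      then show ?thesis using Suc by (simp add: distrib_right)
    qed
  qed
qed

lemma Qf_inv: "Qf (-1) (\<lambda>u. inverse (fps_const u + fps_X))"
  unfolding Qf_def
proof
  fix r
  show "\<exists>c::int. \<forall>u::complex. u \<noteq> 0 \<longrightarrow> inverse (fps_const u + fps_X) $ r = of_int c * u powi (- 1 - int r)"
  proof (intro exI[of _ "(-1) ^ r"] allI impI)
    fix u :: complex assume u: "u \<noteq> 0"
    show "inverse (fps_const u + fps_X) $ r = of_int ((-1) ^ r) * u powi (- 1 - int r)"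
      by (subst inv_lin[OF u]) simp
  qed
qed

lemma powi_expansion:
  fixes u :: complex and \<gamma> :: int
  assumes u: "u \<noteq> 0"
  shows "fps_expansion (\<lambda>u. u powi \<gamma>) u =
    (if \<gamma> \<ge> 0 then (fps_const u + fps_X) ^ nat \<gamma> else inverse (fps_const u + fps_X) ^ nat (- \<gamma>))"
proof -
  have lin: "(\<lambda>y. u + y) has_fps_expansion fps_const u + fps_X"
    by (intro fps_expansion_intros)
  have "(\<lambda>y. (u + y) powi \<gamma>) has_fps_expansion
    (if \<gamma> \<ge> 0 then (fps_const u + fps_X) ^ nat \<gamma> else inverse (fps_const u + fps_X) ^ nat (- \<gamma>))"
  proof (cases "\<gamma> \<ge> 0")
    case True
    then show ?thesis using has_fps_expansion_power[OF lin, of "nat \<gamma>"]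
      by (simp add: power_int_def)
  next
    case False
    have "(\<lambda>y. inverse (u + y)) has_fps_expansion inverse (fps_const u + fps_X)"
      using u by (intro has_fps_expansion_inverse lin) simp
    then show ?thesis using False has_fps_expansion_power[of "\<lambda>y. inverse (u + y)" _ "nat (-\<gamma>)"]
      by (simp add: power_int_def)
  qed
  moreover have "(\<lambda>y. (u + y) powi \<gamma>) has_fps_expansion fps_expansion (\<lambda>u. u powi \<gamma>) u"
  proof -
    have an: "(\<lambda>u. u powi \<gamma>) analytic_on {u}"
      by (rule analytic_on_power_int) (use u in \<open>auto intro: analytic_on_ident\<close>)
    show ?thesis using analytic_at_imp_has_fps_expansion[OF an] by simp
  qed
  ultimately show ?thesis using fps_expansion_unique_complex by blast
qed

lemma powi_coeff: "\<exists>c::int. \<forall>u. u \<noteq> 0 \<longrightarrow> fps_expansion (\<lambda>u. u powi \<gamma>) u $ r = of_int c * u powi (\<gamma> - int r)"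
proof -
  have "Qf \<gamma> (\<lambda>u. if \<gamma> \<ge> 0 then (fps_const u + fps_X) ^ nat \<gamma> else inverse (fps_const u + fps_X) ^ nat (- \<gamma>))"
  proof (cases "\<gamma> \<ge> 0")
    case True
    then show ?thesis using Qf_power[OF Qf_lin, of "nat \<gamma>"] by simp
  next
    case False
    then show ?thesis using Qf_power[OF Qf_inv, of "nat (-\<gamma>)"] by simp
  qed
  then obtain c where c: "\<forall>u::complex. u \<noteq> 0 \<longrightarrow> (if \<gamma> \<ge> 0 then (fps_const u + fps_X) ^ nat \<gamma> else inverse (fps_const u + fps_X) ^ nat (- \<gamma>)) $ r = of_int c * u powi (\<gamma> - int r)"
    unfolding Qf_def by blast
  show ?thesis
  proof (intro exI[of _ c] allI impI)
    fix u :: complex assume u: "u \<noteq> 0"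
    have "fps_expansion (\<lambda>u. u powi \<gamma>) u = (if \<gamma> \<ge> 0 then (fps_const u + fps_X) ^ nat \<gamma> else inverse (fps_const u + fps_X) ^ nat (- \<gamma>))"
      by (rule powi_expansion[OF u])
    thus "fps_expansion (\<lambda>u. u powi \<gamma>) u $ r = of_int c * u powi (\<gamma> - int r)"
      using c u by simp
  qed
qed

lemma powi_coeff1:
  assumes "u \<noteq> 0"
  shows "fps_expansion (\<lambda>u. u powi \<gamma>) u $ 1 = of_int \<gamma> * u powi (\<gamma> - 1)"
proof -
  have "((\<lambda>u. u powi \<gamma>) has_field_derivative of_int \<gamma> * u powi (\<gamma> - 1) * 1) (at u)"
    using assms by (intro derivative_intros) auto
  hence "deriv (\<lambda>u. u powi \<gamma>) u = of_int \<gamma> * u powi (\<gamma> - 1)"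
    using DERIV_imp_deriv by fastforce
  thus ?thesis by (simp add: fps_expansion_def)
qed


lemma bounded_linear_axis: "bounded_linear (axis i :: complex \<Rightarrow> complex^'d::finite)"
proof (rule bounded_linear_intro[where K=1])
  show "axis i (x + y) = axis i x + axis i y" for x y :: complex by (auto simp: axis_def vec_eq_iff)
  show "axis i (r *\<^sub>R x) = r *\<^sub>R axis i x" for r and x :: complex by (simp add: axis_def vec_eq_iff)
  show "norm (axis i x) \<le> norm x * 1" for x
  proof -
    have "norm (axis i x) \<le> (\<Sum>j\<in>UNIV. norm (axis i x $ j))"
      unfolding norm_vec_def by (rule L2_set_le_sum) simp
    also have "(\<Sum>j\<in>UNIV. norm (axis i x $ j)) = (\<Sum>j\<in>UNIV. if j = i then norm x else 0)"
      by (intro sum.cong) (auto simp: axis_def)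
    also have "\<dots> = norm x" by simp
    finally show ?thesis by simp
  qed
qed

lemma upd_affine: "upd b i = (\<lambda>z. b + axis i (z - b $ i))"
  by (auto simp: upd_def axis_def vec_eq_iff)

lemma upd_has_derivative: "(upd b i has_derivative axis i) (at z)"
proof -
  have "((\<lambda>z. z - b $ i) has_derivative (\<lambda>h. h)) (at z)"
    by (auto intro!: derivative_eq_intros)
  from bounded_linear.has_derivative[OF bounded_linear_axis[of i] this]
  have "((\<lambda>z. axis i (z - b $ i)) has_derivative (\<lambda>h. axis i h)) (at z)" .
  hence "((\<lambda>z. b + axis i (z - b $ i)) has_derivative (\<lambda>h. 0 + axis i h)) (at z)"
    by (intro has_derivative_add has_derivative_const)
  thus ?thesis unfolding upd_affine by simp
qed

lemma axis_smult: "h *s axis i (1::complex) = axis i h"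
  by (simp add: axis_def vec_eq_iff)

locale setting =
  fixes \<gamma> :: "int^'d::finite" and g :: "complex \<Rightarrow> complex" and \<alpha> :: complex
    and U :: "(complex^'d) set" and \<psi> :: "complex^'d \<Rightarrow> complex"
  assumes g_holo: "g holomorphic_on UNIV"
    and alpha_nz: "\<alpha> \<noteq> 0"
    and simple: "deriv g \<alpha> \<noteq> 0"
    and U_open: "open U" and U0: "0 \<in> U"
    and psi_holo: "cholomorphic_on \<psi> U"
    and psi_nz: "\<forall>a\<in>U. \<psi> a \<noteq> 0"
    and psi_eq: "\<forall>a\<in>U. g (\<psi> a) + (\<Sum>i\<in>UNIV. a $ i * \<psi> a powi (\<gamma> $ i)) = 0"
    and psi0: "\<psi> 0 = \<alpha>"
begin

definition cc :: "nat \<Rightarrow> complex \<Rightarrow> complex" where "cc m u = (deriv ^^ m) g u / fact m"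
definition E :: "complex^'d \<Rightarrow> complex" where
  "E a = (\<Sum>j\<in>UNIV. a $ j * of_int (\<gamma> $ j) * \<psi> a powi (\<gamma> $ j - 1))"
definition Dfun :: "complex^'d \<Rightarrow> complex" where "Dfun a = cc 1 (\<psi> a) + E a"
definition V :: "(complex^'d) set" where "V = {a \<in> U. Dfun a \<noteq> 0}"

lemma psi_slice_deriv:
  assumes "upd b i z \<in> U"
  shows "(\<lambda>z. \<psi> (upd b i z)) field_differentiable (at z)"
proof -
  obtain D where D: "(\<psi> has_derivative D) (at (upd b i z))" "\<And>c x. D (c *s x) = c * D x"
    using psi_holo assms unfolding cholomorphic_on_def by blast
  have "((\<psi> \<circ> upd b i) has_derivative (D \<circ> axis i)) (at z)"
    by (rule diff_chain_at[OF upd_has_derivative D(1)])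
  moreover have "(D \<circ> axis i) = (*) (D (axis i 1))"
  proof
    fix h
    have "D (h *s axis i 1) = h * D (axis i 1)" by (rule D(2))
    thus "(D \<circ> axis i) h = D (axis i 1) * h" by (simp add: axis_smult mult.commute)
  qed
  ultimately have "((\<lambda>z. \<psi> (upd b i z)) has_field_derivative D (axis i 1)) (at z)"
    by (simp add: has_field_derivative_def o_def)
  thus ?thesis unfolding field_differentiable_def by blast
qed

lemma psi_slice_holo: "(\<lambda>z. \<psi> (upd b i z)) holomorphic_on {z. upd b i z \<in> U}"
proof -
  have o: "open {z. upd b i z \<in> U}" by (rule open_upd_vimage[OF U_open])
  show ?thesis
  proof (subst holomorphic_on_open[OF o], intro ballI)
    fix x assume "x \<in> {z. upd b i z \<in> U}"
    hence "upd b i x \<in> U" by simp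
    from psi_slice_deriv[OF this]
    show "\<exists>f'. ((\<lambda>z. \<psi> (upd b i z)) has_field_derivative f') (at x)"
      unfolding field_differentiable_def .
  qed
qed

lemma SA_psi: "a \<in> U \<Longrightarrow> SA \<psi> a i"
  unfolding SA_def analytic_at
  by (rule exI[of _ "{z. upd a i z \<in> U}"]) (simp add: open_upd_vimage U_open psi_slice_holo)

lemma psi_cont: "continuous_on U \<psi>"
proof (rule continuous_at_imp_continuous_on, intro ballI)
  fix a assume "a \<in> U"
  then obtain D where "(\<psi> has_derivative D) (at a)"
    using psi_holo unfolding cholomorphic_on_def by blast
  thus "isCont \<psi> a" by (rule has_derivative_continuous)
qed

lemma hderiv_holo: "(deriv ^^ m) g holomorphic_on UNIV"
  by (rule holomorphic_higher_deriv[OF g_holo]) simp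

lemma cc_holo: "cc m holomorphic_on UNIV"
proof -
  have "(\<lambda>u. (deriv ^^ m) g u / fact m) holomorphic_on UNIV"
    by (intro holomorphic_intros hderiv_holo) simp
  thus ?thesis by (simp add: cc_def[abs_def])
qed

lemma cc_an: "cc m analytic_on S"
proof -
  have "cc m analytic_on UNIV" using cc_holo analytic_on_open[of UNIV "cc m"] by simp
  thus ?thesis by (rule analytic_on_subset) simp
qed

lemma g_an: "g analytic_on S"
proof -
  have "g analytic_on UNIV" using g_holo analytic_on_open[of UNIV g] by simp
  thus ?thesis by (rule analytic_on_subset) simp
qed

lemma cc_cont: "continuous_on S (cc m)"
proof -
  have "continuous_on UNIV (cc m)" using cc_holo by (rule holomorphic_on_imp_continuous_on)
  thus ?thesis by (rule continuous_on_subset) simp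
qed

lemma Dfun_cont: "continuous_on U Dfun"
proof -
  have "continuous_on U (\<lambda>a. cc 1 (\<psi> a) + (\<Sum>j\<in>UNIV. a $ j * of_int (\<gamma> $ j) * \<psi> a powi (\<gamma> $ j - 1)))"
    using psi_nz
    by (intro continuous_intros continuous_on_compose2[OF cc_cont psi_cont] psi_cont) auto
  thus ?thesis unfolding Dfun_def[abs_def] E_def .
qed

lemma V_open: "open V"
proof -
  have "open (U \<inter> Dfun -` (-{0}))"
    by (rule continuous_open_preimage[OF Dfun_cont U_open]) auto
  moreover have "V = U \<inter> Dfun -` (-{0})" by (auto simp: V_def)
  ultimately show ?thesis by simp
qed

lemma cc1: "cc 1 u = deriv g u"
  by (simp add: cc_def)

lemma Dfun0: "Dfun 0 = deriv g \<alpha>"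
  by (simp add: Dfun_def E_def psi0 cc_def)

lemma V0: "0 \<in> V"
  using U0 simple Dfun0 by (simp add: V_def)

lemma V_U: "V \<subseteq> U"
  by (auto simp: V_def)

lemma V_nz: "a \<in> V \<Longrightarrow> Dfun a \<noteq> 0"
  by (simp add: V_def)

lemma V_psi_nz: "a \<in> V \<Longrightarrow> \<psi> a \<noteq> 0"
  using psi_nz V_U by auto

lemma SA_psiV: "a \<in> V \<Longrightarrow> SA \<psi> a i"
  using SA_psi V_U by auto

lemma SA_powi: "a \<in> V \<Longrightarrow> SA (\<lambda>b. \<psi> b powi e) a i"
  by (rule SA_comp[OF SA_psiV]) (auto intro!: analytic_intros simp: V_psi_nz)

lemma SA_psiinv: "a \<in> V \<Longrightarrow> SA (\<lambda>b. inverse (\<psi> b)) a i"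
  by (rule SA_comp[OF SA_psiV]) (auto intro!: analytic_intros simp: V_psi_nz)

lemma SA_cc: "a \<in> V \<Longrightarrow> SA (\<lambda>b. cc m (\<psi> b)) a i"
  by (rule SA_comp[OF SA_psiV cc_an])

lemma SA_E: "a \<in> V \<Longrightarrow> SA E a i"
  unfolding E_def[abs_def]
  by (intro SA_sum SA_mult SA_coord SA_const SA_powi) auto

lemma SA_Dfun: "a \<in> V \<Longrightarrow> SA Dfun a i"
  unfolding Dfun_def[abs_def] by (intro SA_add SA_cc SA_E)

lemma SA_Dinv: "a \<in> V \<Longrightarrow> SA (\<lambda>b. inverse (Dfun b)) a i"
  by (rule SA_comp[OF SA_Dfun]) (auto intro!: analytic_intros simp: V_nz)

inductive good :: "bool \<Rightarrow> int \<Rightarrow> nat \<Rightarrow> (complex^'d \<Rightarrow> complex) \<Rightarrow> bool" where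
  gzero: "good b w K (\<lambda>_. 0)"
| gconst: "good b 0 0 (\<lambda>_. of_int c)"
| gpsi: "good b 1 0 \<psi>"
| gpsiinv: "good b (-1) 0 (\<lambda>a. inverse (\<psi> a))"
| gcoord: "good b (- (\<gamma> $ j)) 0 (\<lambda>a. a $ j)"
| gDinv: "good True 0 1 (\<lambda>a. inverse (Dfun a))"
| gcc: "2 \<le> m \<Longrightarrow> good b 0 m (\<lambda>a. cc m (\<psi> a))"
| gadd: "good b w K f \<Longrightarrow> good b w K h \<Longrightarrow> good b w K (\<lambda>a. f a + h a)"
| gmult: "good b w1 K1 f \<Longrightarrow> good b w2 K2 h \<Longrightarrow> good b (w1 + w2) (max K1 K2) (\<lambda>a. f a * h a)"
| gmono: "good b w K f \<Longrightarrow> (b \<longrightarrow> b') \<Longrightarrow> w \<le> w' \<Longrightarrow> K \<le> K' \<Longrightarrow> good b' w' K' f"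

lemma good_SA: "good b w K f \<Longrightarrow> a \<in> V \<Longrightarrow> SA f a i"
proof (induction rule: good.induct)
  case (gadd b w K f h) thus ?case by (intro SA_add) auto
next
  case (gmult b w1 K1 f w2 K2 h) thus ?case by (intro SA_mult) auto
qed (simp_all add: SA_const SA_psiV SA_psiinv SA_coord SA_Dinv SA_cc)

end


lemma ipv_pow: "p \<in> int_poly_vals N x \<Longrightarrow> p ^ n \<in> int_poly_vals N x"
  by (induction n) (auto intro: ipv_mult simp: ipv_const[of 1, simplified])

context setting
begin

definition X :: "nat \<Rightarrow> complex" where
  "X j = (if j = 0 then inverse \<alpha> else if j = 1 then inverse ((deriv ^^ 1) g \<alpha> / fact 1)
          else (deriv ^^ j) g \<alpha> / fact j)"

lemma good_value: "good b w K f \<Longrightarrow> K \<le> N \<Longrightarrow> \<exists>p\<in>int_poly_vals N X. f 0 = \<alpha> powi w * p"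
proof (induction rule: good.induct)
  case (gzero b w K)
  show ?case using ipv_const[of 0 N X] by (intro bexI[of _ 0]) auto
next
  case (gconst b c)
  show ?case using ipv_const[of c N X] by (intro bexI[of _ "of_int c"]) auto
next
  case (gpsi b)
  show ?case using ipv_const[of 1 N X] by (intro bexI[of _ 1]) (auto simp: psi0)
next
  case (gpsiinv b)
  show ?case using ipv_const[of 1 N X] by (intro bexI[of _ 1]) (auto simp: psi0 power_int_def)
next
  case (gcoord b j)
  show ?case using ipv_const[of 0 N X] by (intro bexI[of _ 0]) auto
next
  case gDinv
  have "X 1 \<in> int_poly_vals N X" using gDinv by (intro ipv_var) simp
  moreover have "inverse (Dfun 0) = X 1" by (simp add: Dfun0 X_def)
  ultimately show ?case by (intro bexI[of _ "X 1"]) auto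
next
  case (gcc m b)
  have "X m \<in> int_poly_vals N X" using gcc by (intro ipv_var) simp
  moreover have "cc m (\<psi> 0) = X m" using gcc by (simp add: X_def cc_def psi0)
  ultimately show ?case by (intro bexI[of _ "X m"]) auto
next
  case (gadd b w K f h)
  then obtain p q where "p \<in> int_poly_vals N X" "f 0 = \<alpha> powi w * p"
    "q \<in> int_poly_vals N X" "h 0 = \<alpha> powi w * q" by blast
  thus ?case by (intro bexI[of _ "p + q"]) (auto simp: distrib_left intro: ipv_add)
next
  case (gmult b w1 K1 f w2 K2 h)
  then obtain p q where "p \<in> int_poly_vals N X" "f 0 = \<alpha> powi w1 * p"
    "q \<in> int_poly_vals N X" "h 0 = \<alpha> powi w2 * q" by auto
  moreover have "\<alpha> powi (w1 + w2) = \<alpha> powi w1 * \<alpha> powi w2"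
    using alpha_nz by (simp add: power_int_add)
  ultimately show ?case by (intro bexI[of _ "p * q"]) (auto simp: mult_ac intro: ipv_mult)
next
  case (gmono b w K f b' w' K')
  then obtain p where p: "p \<in> int_poly_vals N X" "f 0 = \<alpha> powi w * p" by auto
  have X0: "X 0 \<in> int_poly_vals N X" by (intro ipv_var) simp
  have "\<alpha> powi w' * X 0 ^ nat (w' - w) = \<alpha> powi w' * \<alpha> powi (- int (nat (w' - w)))"
    by (simp add: X_def power_int_def)
  also have "\<dots> = \<alpha> powi (w' + - int (nat (w' - w)))"
    by (rule power_int_add[symmetric]) (use alpha_nz in simp)
  also have "w' + - int (nat (w' - w)) = w" using gmono by simp
  finally have e: "\<alpha> powi w' * X 0 ^ nat (w' - w) = \<alpha> powi w" .
  show ?case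
  proof (intro bexI[of _ "X 0 ^ nat (w' - w) * p"])
    show "f 0 = \<alpha> powi w' * (X 0 ^ nat (w' - w) * p)"
      using p(2) e by (simp add: mult.assoc[symmetric])
    show "X 0 ^ nat (w' - w) * p \<in> int_poly_vals N X"
      by (intro ipv_mult ipv_pow X0 p(1))
  qed
qed

definition goodv :: "int \<Rightarrow> nat \<Rightarrow> (complex^'d \<Rightarrow> complex) \<Rightarrow> bool" where
  "goodv w K F \<longleftrightarrow> (\<exists>f. good True w K f \<and> (\<forall>a\<in>V. F a = f a))"

lemma goodv_good: "good b w K f \<Longrightarrow> goodv w K f"
  unfolding goodv_def by (intro exI[of _ f]) (auto intro: gmono)

lemma goodv_cong: "goodv w K F \<Longrightarrow> (\<And>a. a \<in> V \<Longrightarrow> F a = G a) \<Longrightarrow> goodv w K G"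
  unfolding goodv_def by force

lemma goodv_zero: "goodv w K (\<lambda>_. 0)"
  by (rule goodv_good[OF gzero])

lemma goodv_const: "goodv 0 0 (\<lambda>_. of_int c)"
  by (rule goodv_good[OF gconst])

lemma goodv_add: "goodv w K F \<Longrightarrow> goodv w K G \<Longrightarrow> goodv w K (\<lambda>a. F a + G a)"
  unfolding goodv_def by (auto intro!: gadd)

lemma goodv_mult: "goodv w1 K1 F \<Longrightarrow> goodv w2 K2 G \<Longrightarrow> goodv (w1 + w2) (max K1 K2) (\<lambda>a. F a * G a)"
  unfolding goodv_def by (auto intro!: gmult)

lemma goodv_mono: "goodv w K F \<Longrightarrow> w \<le> w' \<Longrightarrow> K \<le> K' \<Longrightarrow> goodv w' K' F"
  unfolding goodv_def by (auto intro: gmono)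

lemma goodv_sum: "finite J \<Longrightarrow> (\<And>j. j \<in> J \<Longrightarrow> goodv w K (F j)) \<Longrightarrow> goodv w K (\<lambda>a. \<Sum>j\<in>J. F j a)"
proof (induction J rule: finite_induct)
  case empty
  then show ?case using goodv_zero by simp
next
  case (insert x J)
  have "goodv w K (\<lambda>a. F x a + (\<Sum>j\<in>J. F j a))"
    using insert by (intro goodv_add) auto
  thus ?case using insert by simp
qed

lemma good_pow: "good b w K f \<Longrightarrow> good b (int n * w) K (\<lambda>a. f a ^ n)"
proof (induction n)
  case 0
  have "good b 0 K (\<lambda>_. of_int (1::int))" by (rule gmono[OF gconst]) auto
  then show ?case by simp
next
  case (Suc n)
  have "good b (w + int n * w) (max K K) (\<lambda>a. f a * f a ^ n)"
    using Suc by (intro gmult) auto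
  thus ?case by (simp add: algebra_simps)
qed

lemma good_powi: "good b e 0 (\<lambda>a. \<psi> a powi e)"
proof (cases "e \<ge> 0")
  case True
  have "good b (int (nat e) * 1) 0 (\<lambda>a. \<psi> a ^ nat e)" by (intro good_pow gpsi)
  thus ?thesis using True by (simp add: power_int_def)
next
  case False
  have "good b (int (nat (-e)) * (-1)) 0 (\<lambda>a. inverse (\<psi> a) ^ nat (-e))" by (intro good_pow gpsiinv)
  thus ?thesis using False by (simp add: power_int_def)
qed

definition PE :: "int \<Rightarrow> complex \<Rightarrow> complex fps" where
  "PE e u = fps_expansion (\<lambda>u. u powi e) u"

lemma goodv_PE: "goodv (e - int r) 0 (\<lambda>a. PE e (\<psi> a) $ r)"
proof -
  obtain c :: int where c: "\<And>u. u \<noteq> 0 \<Longrightarrow> PE e u $ r = of_int c * u powi (e - int r)"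
    using powi_coeff[of e r] unfolding PE_def by blast
  have "good True (0 + (e - int r)) (max 0 0) (\<lambda>a. of_int c * \<psi> a powi (e - int r))"
    by (intro gmult gconst good_powi)
  hence "goodv (e - int r) 0 (\<lambda>a. of_int c * \<psi> a powi (e - int r))"
    by (auto intro: goodv_good)
  thus ?thesis by (rule goodv_cong) (simp add: c V_psi_nz)
qed

lemma powG:
  assumes hyp: "\<forall>j<k. goodv (int j * \<gamma> $ i) (j + K0) (\<lambda>a. Gs s i a $ j)"
  shows "\<forall>j<k. goodv (int j * \<gamma> $ i) (j + K0) (\<lambda>a. (Gs s i a ^ r) $ j)"
proof (induction r)
  case 0
  show ?case
  proof (intro allI impI)
    fix j assume "j < k"
    show "goodv (int j * \<gamma> $ i) (j + K0) (\<lambda>a. (Gs s i a ^ 0) $ j)"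
    proof (cases "j = 0")
      case True
      have "goodv (int j * \<gamma> $ i) (j + K0) (\<lambda>_. of_int (1::int))"
        by (rule goodv_mono[OF goodv_const]) (use True in auto)
      thus ?thesis using True by simp
    next
      case False
      thus ?thesis using goodv_zero by simp
    qed
  qed
next
  case (Suc r)
  show ?case
  proof (intro allI impI)
    fix j assume j: "j < k"
    have "goodv (int j * \<gamma> $ i) (j + K0) (\<lambda>a. \<Sum>l=0..j. Gs s i a $ l * (Gs s i a ^ r) $ (j - l))"
    proof (intro goodv_sum)
      fix l assume l: "l \<in> {0..j}"
      have "goodv (int l * \<gamma> $ i + int (j - l) * \<gamma> $ i) (max (l + K0) (j - l + K0))
              (\<lambda>a. Gs s i a $ l * (Gs s i a ^ r) $ (j - l))"
        by (intro goodv_mult hyp[rule_format] Suc[rule_format]) (use j l in auto)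
      moreover have "int l * \<gamma> $ i + int (j - l) * \<gamma> $ i = int j * \<gamma> $ i"
        using l by (simp add: of_nat_diff algebra_simps)
      ultimately have "goodv (int j * \<gamma> $ i) (max (l + K0) (j - l + K0)) (\<lambda>a. Gs s i a $ l * (Gs s i a ^ r) $ (j - l))"
        by simp
      thus "goodv (int j * \<gamma> $ i) (j + K0) (\<lambda>a. Gs s i a $ l * (Gs s i a ^ r) $ (j - l))"
        by (rule goodv_mono) (use l in auto)
    qed simp
    thus "goodv (int j * \<gamma> $ i) (j + K0) (\<lambda>a. (Gs s i a ^ Suc r) $ j)"
      by (simp add: fps_mult_nth)
  qed
qed

lemma powG2:
  assumes hyp: "\<forall>j<k. goodv (int j * \<gamma> $ i) (j + K0) (\<lambda>a. Gs s i a $ j)" and r: "2 \<le> r"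
  shows "goodv (int k * \<gamma> $ i) (k + K0) (\<lambda>a. (Gs s i a ^ r) $ k)"
proof -
  note P = powG[OF hyp, of "r - 1"]
  have "goodv (int k * \<gamma> $ i) (k + K0) (\<lambda>a. \<Sum>l=0..k. Gs s i a $ l * (Gs s i a ^ (r - 1)) $ (k - l))"
  proof (intro goodv_sum)
    fix l assume l: "l \<in> {0..k}"
    show "goodv (int k * \<gamma> $ i) (k + K0) (\<lambda>a. Gs s i a $ l * (Gs s i a ^ (r - 1)) $ (k - l))"
    proof (cases "l = 0 \<or> l = k")
      case True
      have "(\<lambda>a. Gs s i a $ l * (Gs s i a ^ (r - 1)) $ (k - l)) = (\<lambda>_. 0)"
      proof
        fix a
        show "Gs s i a $ l * (Gs s i a ^ (r - 1)) $ (k - l) = 0"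
        proof (cases "l = 0")
          case True thus ?thesis by (simp add: Gs_nth)
        next
          case False
          hence "l = k" using \<open>l = 0 \<or> l = k\<close> by simp
          moreover have "(Gs s i a ^ (r - 1)) $ 0 = 0"
            using r by (simp add: fps_power_zeroth Gs_nth)
          ultimately show ?thesis by simp
        qed
      qed
      thus ?thesis using goodv_zero by simp
    next
      case False
      hence lk: "0 < l" "l < k" using l by auto
      have "goodv (int l * \<gamma> $ i + int (k - l) * \<gamma> $ i) (max (l + K0) (k - l + K0))
              (\<lambda>a. Gs s i a $ l * (Gs s i a ^ (r - 1)) $ (k - l))"
        by (intro goodv_mult hyp[rule_format] P[rule_format]) (use lk in auto)
      moreover have "int l * \<gamma> $ i + int (k - l) * \<gamma> $ i = int k * \<gamma> $ i"
        using lk by (simp add: of_nat_diff algebra_simps)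
      ultimately have "goodv (int k * \<gamma> $ i) (max (l + K0) (k - l + K0)) (\<lambda>a. Gs s i a $ l * (Gs s i a ^ (r - 1)) $ (k - l))"
        by simp
      thus ?thesis by (rule goodv_mono) (use lk in auto)
    qed
  qed simp
  moreover have "Gs s i a ^ r = Gs s i a * Gs s i a ^ (r - 1)" for a
    using r by (subst power_eq_if) simp
  ultimately show ?thesis by (simp add: fps_mult_nth)
qed

end

lemma split01:
  fixes G :: "complex fps"
  assumes "1 \<le> k"
  shows "(\<Sum>r=0..k. c r * (G ^ r) $ k) = c 1 * G $ k + (\<Sum>r=2..k. c r * (G ^ r) $ k)"
proof -
  have e: "{0..k} = insert 0 (insert 1 {2..k})" using assms by auto
  show ?thesis unfolding e using assms by (simp add: sum.insert)
qed

context setting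
begin

lemma coord_sum:
  assumes "1 \<le> k"
  shows "(\<Sum>l=0..k. hdv i l (\<lambda>b. b $ j) a * F (k - l)) = a $ j * F k + (if j = i then F (k - 1) else 0)"
proof -
  obtain m where m: "k = Suc m" using assms by (cases k) auto
  have "(\<Sum>l=0..k. hdv i l (\<lambda>b. b $ j) a * F (k - l)) =
        hdv i 0 (\<lambda>b. b $ j) a * F k + (\<Sum>l=0..m. hdv i (Suc l) (\<lambda>b. b $ j) a * F (m - l))"
    unfolding m by (subst sum.atLeast0_atMost_Suc_shift) simp
  also have "(\<Sum>l=0..m. hdv i (Suc l) (\<lambda>b. b $ j) a * F (m - l)) =
             (\<Sum>l=0..m. if l = 0 then (if j = i then F (m - l) else 0) else 0)"
    by (intro sum.cong) (auto simp: hd_coord)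
  also have "\<dots> = (if j = i then F m else 0)"
    by (subst sum.delta) auto
  finally show ?thesis using m by (simp add: hd_coord)
qed

definition Rest :: "'d \<Rightarrow> nat \<Rightarrow> complex^'d \<Rightarrow> complex" where
  "Rest i k a = (\<Sum>r=2..k. cc r (\<psi> a) * (Gs \<psi> i a ^ r) $ k)
     + (\<Sum>j\<in>UNIV. a $ j * (\<Sum>r=2..k. PE (\<gamma> $ j) (\<psi> a) $ r * (Gs \<psi> i a ^ r) $ k))
     + (\<Sum>r=0..k-1. PE (\<gamma> $ i) (\<psi> a) $ r * (Gs \<psi> i a ^ r) $ (k - 1))"

lemma psi_rec:
  assumes a: "a \<in> V" and k: "1 \<le> k"
  shows "Dfun a * hdv i k \<psi> a + Rest i k a = 0"
proof -
  define u where "u = \<psi> a"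
  have u: "u \<noteq> 0" using V_psi_nz a by (simp add: u_def)
  define P where "P r m = (Gs \<psi> i a ^ r) $ m" for r m
  define h where "h = hdv i k \<psi> a"
  define A where "A j = PE (\<gamma> $ j) u" for j
  define T where "T = (\<Sum>r=0..k-1. A i $ r * P r (k - 1))"
  define S1 where "S1 = (\<Sum>r=2..k. cc r u * P r k)"
  define S2 where "S2 j = (\<Sum>r=2..k. A j $ r * P r k)" for j
  have SA1: "SA (\<lambda>b. g (\<psi> b)) a i" by (rule SA_comp[OF SA_psiV[OF a] g_an])
  have SA2: "SA (\<lambda>b. b $ j * \<psi> b powi (\<gamma> $ j)) a i" for j
    by (intro SA_mult SA_coord SA_powi a)
  have zero: "hdv i k (\<lambda>b. g (\<psi> b) + (\<Sum>j\<in>UNIV. b $ j * \<psi> b powi (\<gamma> $ j))) a = 0"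
  proof -
    have "hdv i k (\<lambda>b. g (\<psi> b) + (\<Sum>j\<in>UNIV. b $ j * \<psi> b powi (\<gamma> $ j))) a = hdv i k (\<lambda>_. 0) a"
      by (rule hd_cong[OF V_open a]) (use psi_eq V_U in auto)
    thus ?thesis using k by (simp add: hd_const)
  qed
  have split: "hdv i k (\<lambda>b. g (\<psi> b) + (\<Sum>j\<in>UNIV. b $ j * \<psi> b powi (\<gamma> $ j))) a =
       hdv i k (\<lambda>b. g (\<psi> b)) a + (\<Sum>j\<in>UNIV. hdv i k (\<lambda>b. b $ j * \<psi> b powi (\<gamma> $ j)) a)"
    by (subst hd_add[OF SA1 SA_sum]) (auto intro: SA2 hd_sum)
  have gpart: "hdv i k (\<lambda>b. g (\<psi> b)) a = cc 1 u * h + S1"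
  proof -
    have "hdv i k (\<lambda>b. g (\<psi> b)) a = (\<Sum>r=0..k. cc r u * P r k)"
      unfolding hd_comp[OF SA_psiV[OF a] g_an] P_def u_def
      by (simp add: fps_expansion_def cc_def)
    also have "\<dots> = cc 1 u * Gs \<psi> i a $ k + S1"
      unfolding P_def S1_def by (rule split01[OF k])
    also have "Gs \<psi> i a $ k = h" using k by (simp add: Gs_nth h_def)
    finally show ?thesis .
  qed
  have pw: "hdv i m (\<lambda>b. \<psi> b powi e) a = (\<Sum>r=0..m. PE e u $ r * P r m)" for e m
  proof -
    have an: "(\<lambda>u. u powi e) analytic_on {\<psi> a}"
      by (rule analytic_on_power_int) (use u in \<open>auto simp: u_def intro: analytic_on_ident\<close>)
    show ?thesis unfolding hd_comp[OF SA_psiV[OF a] an] P_def u_def PE_def ..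
  qed
  have cj: "hdv i k (\<lambda>b. b $ j * \<psi> b powi (\<gamma> $ j)) a =
        a $ j * (A j $ 1 * h + S2 j) + (if j = i then T else 0)" for j
  proof -
    have "hdv i k (\<lambda>b. b $ j * \<psi> b powi (\<gamma> $ j)) a =
          (\<Sum>l=0..k. hdv i l (\<lambda>b. b $ j) a * hdv i (k - l) (\<lambda>b. \<psi> b powi (\<gamma> $ j)) a)"
      by (rule hd_mult[OF SA_coord SA_powi[OF a]])
    also have "\<dots> = a $ j * hdv i k (\<lambda>b. \<psi> b powi (\<gamma> $ j)) a +
         (if j = i then hdv i (k - 1) (\<lambda>b. \<psi> b powi (\<gamma> $ j)) a else 0)"
      by (rule coord_sum[OF k])
    also have "hdv i k (\<lambda>b. \<psi> b powi (\<gamma> $ j)) a = A j $ 1 * h + S2 j"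
      unfolding pw A_def S2_def P_def
      using split01[OF k, of "\<lambda>r. PE (\<gamma> $ j) u $ r" "Gs \<psi> i a"] k by (simp add: Gs_nth h_def)
    also have "(if j = i then hdv i (k - 1) (\<lambda>b. \<psi> b powi (\<gamma> $ j)) a else 0) = (if j = i then T else 0)"
      by (simp add: pw T_def A_def)
    finally show ?thesis .
  qed
  have A1: "A j $ 1 = of_int (\<gamma> $ j) * u powi (\<gamma> $ j - 1)" for j
    unfolding A_def PE_def by (rule powi_coeff1[OF u])
  have "0 = cc 1 u * h + S1 + (\<Sum>j\<in>UNIV. a $ j * (A j $ 1 * h + S2 j) + (if j = i then T else 0))"
    using zero split gpart cj by simp
  also have "\<dots> = (cc 1 u + (\<Sum>j\<in>UNIV. a $ j * (A j $ 1))) * h + (S1 + (\<Sum>j\<in>UNIV. a $ j * S2 j) + T)"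
    by (simp add: sum.distrib distrib_left distrib_right sum_distrib_right sum_distrib_left algebra_simps)
  also have "cc 1 u + (\<Sum>j\<in>UNIV. a $ j * (A j $ 1)) = Dfun a"
    using A1[unfolded One_nat_def] by (simp add: Dfun_def E_def u_def mult.assoc)
  also have "S1 + (\<Sum>j\<in>UNIV. a $ j * S2 j) + T = Rest i k a"
    by (simp add: Rest_def S1_def S2_def T_def P_def A_def u_def)
  finally show ?thesis by (simp add: h_def)
qed

end

context setting
begin

lemma hypG:
  assumes "\<And>j. 1 \<le> j \<Longrightarrow> j < k \<Longrightarrow> goodv (int j * \<gamma> $ i) (j + K0) (hdv i j s)"
  shows "\<forall>j<k. goodv (int j * \<gamma> $ i) (j + K0) (\<lambda>a. Gs s i a $ j)"
proof (intro allI impI)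
  fix j assume j: "j < k"
  show "goodv (int j * \<gamma> $ i) (j + K0) (\<lambda>a. Gs s i a $ j)"
  proof (cases "j = 0")
    case True thus ?thesis by (simp add: Gs_nth goodv_zero)
  next
    case False
    thus ?thesis using assms[of j] j by (simp add: Gs_nth)
  qed
qed

lemma goodv_Rest:
  assumes hyp: "\<forall>j<k. goodv (int j * \<gamma> $ i) (j + 0) (\<lambda>a. Gs \<psi> i a $ j)" and k: "1 \<le> k"
  shows "goodv (int k * \<gamma> $ i) k (Rest i k)"
proof -
  have S1: "goodv (int k * \<gamma> $ i) k (\<lambda>a. \<Sum>r=2..k. cc r (\<psi> a) * (Gs \<psi> i a ^ r) $ k)"
  proof (intro goodv_sum)
    fix r assume r: "r \<in> {2..k}"
    have "goodv (0 + int k * \<gamma> $ i) (max r (k + 0)) (\<lambda>a. cc r (\<psi> a) * (Gs \<psi> i a ^ r) $ k)"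
      using r by (intro goodv_mult goodv_good[OF gcc] powG2[OF hyp]) auto
    thus "goodv (int k * \<gamma> $ i) k (\<lambda>a. cc r (\<psi> a) * (Gs \<psi> i a ^ r) $ k)"
      by (rule goodv_mono) (use r in auto)
  qed simp
  have S2: "goodv (int k * \<gamma> $ i) k
      (\<lambda>a. \<Sum>j\<in>UNIV. a $ j * (\<Sum>r=2..k. PE (\<gamma> $ j) (\<psi> a) $ r * (Gs \<psi> i a ^ r) $ k))"
  proof (intro goodv_sum)
    fix j :: 'd
    have inner: "goodv (\<gamma> $ j + int k * \<gamma> $ i) k
        (\<lambda>a. \<Sum>r=2..k. PE (\<gamma> $ j) (\<psi> a) $ r * (Gs \<psi> i a ^ r) $ k)"
    proof (intro goodv_sum)
      fix r assume r: "r \<in> {2..k}"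
      have "goodv (\<gamma> $ j - int r + int k * \<gamma> $ i) (max 0 (k + 0))
          (\<lambda>a. PE (\<gamma> $ j) (\<psi> a) $ r * (Gs \<psi> i a ^ r) $ k)"
        using r by (intro goodv_mult goodv_PE powG2[OF hyp]) auto
      thus "goodv (\<gamma> $ j + int k * \<gamma> $ i) k (\<lambda>a. PE (\<gamma> $ j) (\<psi> a) $ r * (Gs \<psi> i a ^ r) $ k)"
        by (rule goodv_mono) auto
    qed simp
    have "goodv (- (\<gamma> $ j) + (\<gamma> $ j + int k * \<gamma> $ i)) (max 0 k)
        (\<lambda>a. a $ j * (\<Sum>r=2..k. PE (\<gamma> $ j) (\<psi> a) $ r * (Gs \<psi> i a ^ r) $ k))"
      by (intro goodv_mult goodv_good[OF gcoord] inner)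
    thus "goodv (int k * \<gamma> $ i) k
        (\<lambda>a. a $ j * (\<Sum>r=2..k. PE (\<gamma> $ j) (\<psi> a) $ r * (Gs \<psi> i a ^ r) $ k))"
      by (rule goodv_mono) auto
  qed simp
  have T: "goodv (int k * \<gamma> $ i) k
      (\<lambda>a. \<Sum>r=0..k-1. PE (\<gamma> $ i) (\<psi> a) $ r * (Gs \<psi> i a ^ r) $ (k - 1))"
  proof (intro goodv_sum)
    fix r assume r: "r \<in> {0..k-1}"
    have P: "goodv (int (k - 1) * \<gamma> $ i) (k - 1 + 0) (\<lambda>a. (Gs \<psi> i a ^ r) $ (k - 1))"
      by (rule powG[OF hyp, rule_format]) (use k in simp)
    have "goodv (\<gamma> $ i - int r + int (k - 1) * \<gamma> $ i) (max 0 (k - 1 + 0))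
        (\<lambda>a. PE (\<gamma> $ i) (\<psi> a) $ r * (Gs \<psi> i a ^ r) $ (k - 1))"
      by (intro goodv_mult goodv_PE P)
    moreover have "\<gamma> $ i - int r + int (k - 1) * \<gamma> $ i \<le> int k * \<gamma> $ i"
      using k by (simp add: of_nat_diff algebra_simps)
    ultimately show "goodv (int k * \<gamma> $ i) k (\<lambda>a. PE (\<gamma> $ i) (\<psi> a) $ r * (Gs \<psi> i a ^ r) $ (k - 1))"
      by (elim goodv_mono) auto
  qed simp
  have "goodv (int k * \<gamma> $ i) k (\<lambda>a. (\<Sum>r=2..k. cc r (\<psi> a) * (Gs \<psi> i a ^ r) $ k)
     + (\<Sum>j\<in>UNIV. a $ j * (\<Sum>r=2..k. PE (\<gamma> $ j) (\<psi> a) $ r * (Gs \<psi> i a ^ r) $ k))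
     + (\<Sum>r=0..k-1. PE (\<gamma> $ i) (\<psi> a) $ r * (Gs \<psi> i a ^ r) $ (k - 1)))"
    by (intro goodv_add S1 S2 T)
  thus ?thesis unfolding Rest_def[abs_def] .
qed

lemma psi_hd: "1 \<le> k \<Longrightarrow> goodv (int k * \<gamma> $ i) k (hdv i k \<psi>)"
proof (induction k rule: less_induct)
  case (less k)
  have hyp: "\<forall>j<k. goodv (int j * \<gamma> $ i) (j + 0) (\<lambda>a. Gs \<psi> i a $ j)"
    by (rule hypG) (use less in simp)
  have R: "goodv (int k * \<gamma> $ i) k (Rest i k)" by (rule goodv_Rest[OF hyp less(2)])
  have "goodv (0 + 0 + int k * \<gamma> $ i) (max (max 0 1) k) (\<lambda>a. of_int (-1) * inverse (Dfun a) * Rest i k a)"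
    by (intro goodv_mult goodv_const goodv_good[OF gDinv] R)
  hence "goodv (int k * \<gamma> $ i) k (\<lambda>a. of_int (-1) * inverse (Dfun a) * Rest i k a)"
    by (rule goodv_mono) (use less in auto)
  thus ?case
  proof (rule goodv_cong)
    fix a assume a: "a \<in> V"
    have "Dfun a * hdv i k \<psi> a + Rest i k a = 0" by (rule psi_rec[OF a less(2)])
    hence r: "Rest i k a = - (Dfun a * hdv i k \<psi> a)" by (simp add: add_eq_0_iff)
    show "of_int (-1) * inverse (Dfun a) * Rest i k a = hdv i k \<psi> a"
      using V_nz[OF a] by (simp add: r)
  qed
qed

end

context setting
begin

lemma cc_coeff: "fps_expansion (cc m) u $ r = of_nat ((m + r) choose r) * cc (m + r) u"
proof -
  have ccm: "cc m = (\<lambda>u. inverse (fact m) * (deriv ^^ m) g u)"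
    by (rule ext) (simp add: cc_def field_simps)
  have "(deriv ^^ r) (cc m) u = inverse (fact m) * (deriv ^^ r) ((deriv ^^ m) g) u"
    unfolding ccm by (rule higher_deriv_cmult[OF hderiv_holo]) auto
  also have "(deriv ^^ r) ((deriv ^^ m) g) = (deriv ^^ (r + m)) g"
    by (simp add: funpow_add)
  finally have 1: "(deriv ^^ r) (cc m) u = inverse (fact m) * (deriv ^^ (m + r)) g u"
    by (simp add: add.commute)
  have "fact r * fact (m + r - r) * ((m + r) choose r) = fact (m + r)"
    by (rule binomial_fact_lemma) simp
  hence "of_nat (fact r * fact m * ((m + r) choose r)) = (of_nat (fact (m + r)) :: complex)"
    by simp
  hence 2: "(fact r * fact m * of_nat ((m + r) choose r) :: complex) = fact (m + r)"
    by (simp add: of_nat_fact)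
  show ?thesis
    unfolding fps_expansion_def fps_nth_Abs_fps 1 cc_def
    by (simp add: 2[symmetric] field_simps)
qed

lemma good_sum: "finite J \<Longrightarrow> (\<And>j. j \<in> J \<Longrightarrow> good b w K (f j)) \<Longrightarrow> good b w K (\<lambda>a. \<Sum>j\<in>J. f j a)"
proof (induction J rule: finite_induct)
  case empty
  then show ?case using gzero by simp
next
  case (insert x J)
  have "good b w K (\<lambda>a. f x a + (\<Sum>j\<in>J. f j a))"
    using insert by (intro gadd) auto
  thus ?case using insert by simp
qed

lemma goodv_comp:
  assumes SAs: "\<And>a. a \<in> V \<Longrightarrow> SA s a i" and an: "\<And>a. a \<in> V \<Longrightarrow> h analytic_on {s a}"
   and hyp: "\<forall>j. goodv (int j * \<gamma> $ i) (j + K0) (\<lambda>a. Gs s i a $ j)"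
   and coef: "\<And>r. r \<le> k \<Longrightarrow> goodv (wc r) (Kc r) (\<lambda>a. fps_expansion h (s a) $ r)"
   and wle: "\<And>r. r \<le> k \<Longrightarrow> wc r \<le> w0" and Kle: "\<And>r. r \<le> k \<Longrightarrow> Kc r \<le> Kt" and kK: "k + K0 \<le> Kt"
  shows "goodv (w0 + int k * \<gamma> $ i) Kt (hdv i k (\<lambda>b. h (s b)))"
proof -
  have hyp': "\<forall>j<Suc k. goodv (int j * \<gamma> $ i) (j + K0) (\<lambda>a. Gs s i a $ j)" using hyp by auto
  have "goodv (w0 + int k * \<gamma> $ i) Kt (\<lambda>a. \<Sum>r=0..k. fps_expansion h (s a) $ r * (Gs s i a ^ r) $ k)"
  proof (intro goodv_sum)
    fix r assume r: "r \<in> {0..k}"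
    have "goodv (wc r + int k * \<gamma> $ i) (max (Kc r) (k + K0)) (\<lambda>a. fps_expansion h (s a) $ r * (Gs s i a ^ r) $ k)"
      using r by (intro goodv_mult coef powG[OF hyp', rule_format]) auto
    thus "goodv (w0 + int k * \<gamma> $ i) Kt (\<lambda>a. fps_expansion h (s a) $ r * (Gs s i a ^ r) $ k)"
      by (rule goodv_mono) (use r wle Kle kK in auto)
  qed simp
  thus ?thesis
    by (rule goodv_cong) (simp add: hd_comp[OF SAs an])
qed

lemma psi_hyp: "\<forall>j. goodv (int j * \<gamma> $ i) (j + 0) (\<lambda>a. Gs \<psi> i a $ j)"
proof
  fix j
  have "\<forall>j'<Suc j. goodv (int j' * \<gamma> $ i) (j' + 0) (\<lambda>a. Gs \<psi> i a $ j')"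
    by (rule hypG) (simp add: psi_hd)
  thus "goodv (int j * \<gamma> $ i) (j + 0) (\<lambda>a. Gs \<psi> i a $ j)" by simp
qed

lemma powi_m1: "x powi (-1) = inverse (x :: complex)"
  by (simp add: power_int_def)

lemma goodv_PEm1: "goodv 0 1 (\<lambda>a. PE (-1) (Dfun a) $ r)"
proof -
  obtain c :: int where c: "\<And>u. u \<noteq> 0 \<Longrightarrow> PE (-1) u $ r = of_int c * u powi (-1 - int r)"
    using powi_coeff[of "-1" r] unfolding PE_def by blast
  have "good True (0 + int (Suc r) * 0) (max 0 1) (\<lambda>a. of_int c * inverse (Dfun a) ^ Suc r)"
    by (intro gmult gconst good_pow gDinv)
  hence "goodv 0 1 (\<lambda>a. of_int c * inverse (Dfun a) ^ Suc r)"
    by (auto intro: goodv_good)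
  thus ?thesis
  proof (rule goodv_cong)
    fix a assume a: "a \<in> V"
    have "Dfun a powi (-1 - int r) = inverse (Dfun a) ^ nat (- (-1 - int r))"
      by (simp add: power_int_def)
    also have "nat (- (-1 - int r)) = Suc r"
    proof -
      have "- (-1 - int r) = int (Suc r)" by simp
      thus ?thesis by (simp only: nat_int)
    qed
    finally have "Dfun a powi (-1 - int r) = inverse (Dfun a) ^ Suc r" .
    thus "of_int c * inverse (Dfun a) ^ Suc r = PE (- 1) (Dfun a) $ r"
      using c[OF V_nz[OF a]] by simp
  qed
qed

definition DOK :: "'d \<Rightarrow> bool" where
  "DOK i \<longleftrightarrow> (\<forall>j. goodv (int j * \<gamma> $ i) (j + 1) (\<lambda>a. Gs Dfun i a $ j))"

lemma closure_hd:
  "good b w K f \<Longrightarrow> (b \<Longrightarrow> DOK i) \<Longrightarrow> goodv (w + int k * \<gamma> $ i) (K + k) (hdv i k f)"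
proof (induction arbitrary: k rule: good.induct)
  case (gzero b w K)
  show ?case by (rule goodv_cong[OF goodv_zero]) (simp add: hd_const)
next
  case (gconst b c)
  show ?case
  proof (cases "k = 0")
    case True
    thus ?thesis using goodv_const[of c] by simp
  next
    case False
    thus ?thesis by (intro goodv_cong[OF goodv_zero]) (simp add: hd_const)
  qed
next
  case (gpsi b)
  show ?case
  proof (cases "k = 0")
    case True
    thus ?thesis using goodv_good[OF good.gpsi] by simp
  next
    case False
    hence "goodv (int k * \<gamma> $ i) k (hdv i k \<psi>)" by (intro psi_hd) simp
    thus ?thesis by (rule goodv_mono) auto
  qed
next
  case (gpsiinv b)
  have "goodv (-1 + int k * \<gamma> $ i) (0 + k) (hdv i k (\<lambda>b. (\<lambda>u. u powi (-1)) (\<psi> b)))"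
  proof (rule goodv_comp[OF SA_psiV _ psi_hyp])
    show "(\<lambda>u. u powi (-1)) analytic_on {\<psi> a}" if "a \<in> V" for a
      by (rule analytic_on_power_int) (use that V_psi_nz in \<open>auto intro: analytic_on_ident\<close>)
    show "goodv (-1 - int r) 0 (\<lambda>a. fps_expansion (\<lambda>u. u powi (-1)) (\<psi> a) $ r)" for r
      using goodv_PE[of "-1" r] unfolding PE_def .
  qed auto
  thus ?case by (simp add: powi_m1)
next
  case (gcoord b j)
  show ?case
  proof (cases "k = 0")
    case True
    thus ?thesis using goodv_good[OF good.gcoord[of _ j]] by simp
  next
    case False
    show ?thesis
    proof (cases "k = 1 \<and> j = i")
      case True
      have "goodv (- (\<gamma> $ j) + int k * \<gamma> $ i) (0 + k) (\<lambda>_. of_int 1)"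
        by (rule goodv_mono[OF goodv_const]) (use True in auto)
      thus ?thesis by (rule goodv_cong) (use True in \<open>simp add: hd_coord\<close>)
    next
      case False
      thus ?thesis using \<open>k \<noteq> 0\<close> by (intro goodv_cong[OF goodv_zero]) (auto simp: hd_coord)
    qed
  qed
next
  case gDinv
  have D: "DOK i" using gDinv by simp
  have "goodv (0 + int k * \<gamma> $ i) (1 + k) (hdv i k (\<lambda>b. (\<lambda>u. u powi (-1)) (Dfun b)))"
  proof (rule goodv_comp[OF SA_Dfun _ D[unfolded DOK_def]])
    show "(\<lambda>u. u powi (-1)) analytic_on {Dfun a}" if "a \<in> V" for a
      by (rule analytic_on_power_int) (use that V_nz in \<open>auto intro: analytic_on_ident\<close>)
    show "goodv 0 1 (\<lambda>a. fps_expansion (\<lambda>u. u powi (-1)) (Dfun a) $ r)" for r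
      using goodv_PEm1[of r] unfolding PE_def .
  qed auto
  thus ?case by (simp add: powi_m1)
next
  case (gcc m b)
  have "goodv (0 + int k * \<gamma> $ i) (m + k) (hdv i k (\<lambda>b. cc m (\<psi> b)))"
  proof (rule goodv_comp[OF SA_psiV cc_an psi_hyp])
    fix r assume r: "r \<le> k"
    have "good True (0 + 0) (max 0 (m + r)) (\<lambda>a. of_int (int ((m + r) choose r)) * cc (m + r) (\<psi> a))"
      using gcc by (intro gmult gconst good.gcc) auto
    hence "goodv 0 (m + r) (\<lambda>a. of_int (int ((m + r) choose r)) * cc (m + r) (\<psi> a))"
      by (auto intro: goodv_good)
    thus "goodv 0 (m + r) (\<lambda>a. fps_expansion (cc m) (\<psi> a) $ r)"
      by (rule goodv_cong) (simp add: cc_coeff)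
  qed auto
  thus ?case by simp
next
  case (gadd b w K f h)
  have "goodv (w + int k * \<gamma> $ i) (K + k) (\<lambda>a. hdv i k f a + hdv i k h a)"
    using gadd by (intro goodv_add) auto
  thus ?case
  proof (rule goodv_cong)
    fix a assume a: "a \<in> V"
    show "hdv i k f a + hdv i k h a = hdv i k (\<lambda>a. f a + h a) a"
      by (rule hd_add[symmetric, OF good_SA[OF gadd.hyps(1) a] good_SA[OF gadd.hyps(2) a]])
  qed
next
  case (gmult b w1 K1 f w2 K2 h)
  have "goodv (w1 + w2 + int k * \<gamma> $ i) (max K1 K2 + k) (\<lambda>a. \<Sum>l=0..k. hdv i l f a * hdv i (k - l) h a)"
  proof (intro goodv_sum)
    fix l assume l: "l \<in> {0..k}"
    have "goodv (w1 + int l * \<gamma> $ i + (w2 + int (k - l) * \<gamma> $ i)) (max (K1 + l) (K2 + (k - l)))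
            (\<lambda>a. hdv i l f a * hdv i (k - l) h a)"
      using gmult by (intro goodv_mult) auto
    moreover have "w1 + int l * \<gamma> $ i + (w2 + int (k - l) * \<gamma> $ i) = w1 + w2 + int k * \<gamma> $ i"
      using l by (simp add: of_nat_diff algebra_simps)
    ultimately have "goodv (w1 + w2 + int k * \<gamma> $ i) (max (K1 + l) (K2 + (k - l)))
            (\<lambda>a. hdv i l f a * hdv i (k - l) h a)" by simp
    thus "goodv (w1 + w2 + int k * \<gamma> $ i) (max K1 K2 + k) (\<lambda>a. hdv i l f a * hdv i (k - l) h a)"
      by (rule goodv_mono) (use l in auto)
  qed simp
  thus ?case
  proof (rule goodv_cong)
    fix a assume a: "a \<in> V"
    show "(\<Sum>l=0..k. hdv i l f a * hdv i (k - l) h a) = hdv i k (\<lambda>a. f a * h a) a"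
      by (rule hd_mult[symmetric, OF good_SA[OF gmult.hyps(1) a] good_SA[OF gmult.hyps(2) a]])
  qed
next
  case (gmono b w K f b' w' K')
  have "goodv (w + int k * \<gamma> $ i) (K + k) (hdv i k f)"
    using gmono by auto
  thus ?case by (rule goodv_mono) (use gmono in auto)
qed

lemma good_E: "good False (-1) 0 E"
proof -
  have "good False (-1) 0 (\<lambda>a. \<Sum>j\<in>UNIV. a $ j * of_int (\<gamma> $ j) * \<psi> a powi (\<gamma> $ j - 1))"
  proof (intro good_sum)
    fix j :: 'd
    have "good False (- (\<gamma> $ j) + 0 + (\<gamma> $ j - 1)) (max (max 0 0) 0)
        (\<lambda>a. a $ j * of_int (\<gamma> $ j) * \<psi> a powi (\<gamma> $ j - 1))"
      by (intro gmult gcoord gconst good_powi)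
    thus "good False (-1) 0 (\<lambda>a. a $ j * of_int (\<gamma> $ j) * \<psi> a powi (\<gamma> $ j - 1))"
      by simp
  qed simp
  thus ?thesis unfolding E_def[abs_def] .
qed

lemma DOK: "DOK i"
  unfolding DOK_def
proof
  fix j
  show "goodv (int j * \<gamma> $ i) (j + 1) (\<lambda>a. Gs Dfun i a $ j)"
  proof (cases "j = 0")
    case True thus ?thesis by (simp add: Gs_nth goodv_zero)
  next
    case False
    have E: "goodv (-1 + int j * \<gamma> $ i) (0 + j) (hdv i j E)"
      by (rule closure_hd[OF good_E]) simp
    have C: "goodv (int j * \<gamma> $ i) (j + 1) (\<lambda>a. \<Sum>r=0..j. fps_expansion (cc 1) (\<psi> a) $ r * (Gs \<psi> i a ^ r) $ j)"
    proof (intro goodv_sum)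
      fix r assume r: "r \<in> {0..j}"
      show "goodv (int j * \<gamma> $ i) (j + 1) (\<lambda>a. fps_expansion (cc 1) (\<psi> a) $ r * (Gs \<psi> i a ^ r) $ j)"
      proof (cases "r = 0")
        case True
        thus ?thesis using False by (intro goodv_cong[OF goodv_zero]) simp
      next
        case False
        have "good True (0 + 0) (max 0 (1 + r)) (\<lambda>a. of_int (int ((1 + r) choose r)) * cc (1 + r) (\<psi> a))"
          using False by (intro gmult gconst gcc) auto
        hence c: "goodv 0 (1 + r) (\<lambda>a. fps_expansion (cc 1) (\<psi> a) $ r)"
          by (intro goodv_cong[OF goodv_good]) (simp_all add: cc_coeff)
        have p: "goodv (int j * \<gamma> $ i) (j + 0) (\<lambda>a. (Gs \<psi> i a ^ r) $ j)"
          by (rule powG[of "Suc j", rule_format]) (use psi_hyp in auto)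
        have "goodv (0 + int j * \<gamma> $ i) (max (1 + r) (j + 0)) (\<lambda>a. fps_expansion (cc 1) (\<psi> a) $ r * (Gs \<psi> i a ^ r) $ j)"
          by (rule goodv_mult[OF c p])
        thus ?thesis by (rule goodv_mono) (use r in auto)
      qed
    qed simp
    have "goodv (int j * \<gamma> $ i) (j + 1) (\<lambda>a. (\<Sum>r=0..j. fps_expansion (cc 1) (\<psi> a) $ r * (Gs \<psi> i a ^ r) $ j) + hdv i j E a)"
      by (intro goodv_add C goodv_mono[OF E]) auto
    thus ?thesis
    proof (rule goodv_cong)
      fix a assume a: "a \<in> V"
      have "hdv i j Dfun a = hdv i j (\<lambda>b. cc 1 (\<psi> b) + E b) a"
        by (simp add: Dfun_def[abs_def])
      also have "\<dots> = hdv i j (\<lambda>b. cc 1 (\<psi> b)) a + hdv i j E a"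
        by (rule hd_add[OF SA_cc[OF a] SA_E[OF a]])
      also have "hdv i j (\<lambda>b. cc 1 (\<psi> b)) a = (\<Sum>r=0..j. fps_expansion (cc 1) (\<psi> a) $ r * (Gs \<psi> i a ^ r) $ j)"
        by (rule hd_comp[OF SA_psiV[OF a] cc_an])
      finally show "(\<Sum>r=0..j. fps_expansion (cc 1) (\<psi> a) $ r * (Gs \<psi> i a ^ r) $ j) + hdv i j E a = Gs Dfun i a $ j"
        using False by (simp add: Gs_nth)
    qed
  qed
qed

lemma closureT: "good b w K f \<Longrightarrow> goodv (w + int k * \<gamma> $ i) (K + k) (hdv i k f)"
  by (rule closure_hd) (simp_all add: DOK)

end

lemma hd_cmult:
  assumes "SA f a i"
  shows "hdv i k (\<lambda>b. c * f b) a = c * hdv i k f a"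
  using higher_deriv_cmult'[OF assms[unfolded SA_def], of k c] by (simp add: hd_eq)

context setting
begin

lemma fold_claim:
  fixes n :: "nat^'d"
  shows "distinct xs \<Longrightarrow>
   ((\<Sum>i\<in>set xs. n $ i) = 0 \<longrightarrow> foldr (\<lambda>i h. (cpartial i ^^ (n $ i)) h) xs \<psi> = \<psi>) \<and>
   ((\<Sum>i\<in>set xs. n $ i) \<ge> 1 \<longrightarrow> (\<exists>f. good True (\<Sum>i\<in>set xs. int (n $ i) * \<gamma> $ i) (\<Sum>i\<in>set xs. n $ i) f \<and>
       (\<forall>a\<in>V. foldr (\<lambda>i h. (cpartial i ^^ (n $ i)) h) xs \<psi> a = (\<Prod>i\<in>set xs. fact (n $ i)) * f a)))"
proof (induction xs)
  case Nil
  then show ?case by simp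
next
  case (Cons i xs)
  define F where "F = (\<lambda>i h. (cpartial i ^^ (n $ i)) (h :: complex^'d \<Rightarrow> complex))"
  define S where "S = (\<Sum>j\<in>set xs. n $ j)"
  define W where "W = (\<Sum>j\<in>set xs. int (n $ j) * \<gamma> $ j)"
  define P where "P = (\<Prod>j\<in>set xs. fact (n $ j) :: complex)"
  define k where "k = n $ i"
  have ni: "i \<notin> set xs" "distinct xs" using Cons by auto
  have IH: "(S = 0 \<longrightarrow> foldr F xs \<psi> = \<psi>) \<and>
     (S \<ge> 1 \<longrightarrow> (\<exists>f. good True W S f \<and> (\<forall>a\<in>V. foldr F xs \<psi> a = P * f a)))"
    using Cons.IH[OF ni(2)] unfolding F_def S_def W_def P_def .
  have sums: "(\<Sum>j\<in>set (i # xs). n $ j) = k + S"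
    "(\<Sum>j\<in>set (i # xs). int (n $ j) * \<gamma> $ j) = int k * \<gamma> $ i + W"
    "(\<Prod>j\<in>set (i # xs). fact (n $ j) :: complex) = fact k * P"
    using ni by (simp_all add: S_def W_def P_def k_def)
  have fo: "foldr F (i # xs) \<psi> = (cpartial i ^^ k) (foldr F xs \<psi>)"
    by (simp add: F_def k_def)
  show ?case unfolding F_def[symmetric] sums fo
  proof (cases "S = 0")
    case True
    hence h: "foldr F xs \<psi> = \<psi>" using IH by simp
    have W0: "W = 0"
    proof -
      have "\<forall>j\<in>set xs. n $ j = 0" using True by (simp add: S_def)
      thus ?thesis by (simp add: W_def)
    qed
    have P1: "P = 1"
    proof -
      have "\<forall>j\<in>set xs. n $ j = 0" using True by (simp add: S_def)
      thus ?thesis by (simp add: P_def)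
    qed
    show "(k + S = 0 \<longrightarrow> (cpartial i ^^ k) (foldr F xs \<psi>) = \<psi>) \<and>
      (1 \<le> k + S \<longrightarrow> (\<exists>f. good True (int k * \<gamma> $ i + W) (k + S) f \<and>
         (\<forall>a\<in>V. (cpartial i ^^ k) (foldr F xs \<psi>) a = fact k * P * f a)))"
    proof (intro conjI impI)
      assume "k + S = 0"
      hence "k = 0" by simp
      thus "(cpartial i ^^ k) (foldr F xs \<psi>) = \<psi>" using h by simp
    next
      assume "1 \<le> k + S"
      hence k1: "1 \<le> k" using True by simp
      obtain f where f: "good True (int k * \<gamma> $ i) k f" "\<forall>a\<in>V. hdv i k \<psi> a = f a"
        using psi_hd[OF k1, of i] unfolding goodv_def by blast
      show "\<exists>f. good True (int k * \<gamma> $ i + W) (k + S) f \<and>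
         (\<forall>a\<in>V. (cpartial i ^^ k) (foldr F xs \<psi>) a = fact k * P * f a)"
        using f by (intro exI[of _ f]) (simp add: W0 True P1 h cpartial_pow_hd)
    qed
  next
    case False
    hence S1: "S \<ge> 1" by simp
    obtain f0 where f0: "good True W S f0" "\<forall>a\<in>V. foldr F xs \<psi> a = P * f0 a"
      using IH S1 by blast
    obtain f1 where f1: "good True (W + int k * \<gamma> $ i) (S + k) f1" "\<forall>a\<in>V. hdv i k f0 a = f1 a"
      using closureT[OF f0(1), of k i] unfolding goodv_def by blast
    have eq: "(cpartial i ^^ k) (foldr F xs \<psi>) a = fact k * P * f1 a" if a: "a \<in> V" for a
    proof -
      have "(cpartial i ^^ k) (foldr F xs \<psi>) a = fact k * hdv i k (foldr F xs \<psi>) a"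
        by (rule cpartial_pow_hd)
      also have "hdv i k (foldr F xs \<psi>) a = hdv i k (\<lambda>b. P * f0 b) a"
        by (rule hd_cong[OF V_open a]) (use f0 in auto)
      also have "\<dots> = P * hdv i k f0 a"
        by (rule hd_cmult[OF good_SA[OF f0(1) a]])
      finally show ?thesis using f1 a by simp
    qed
    show "(k + S = 0 \<longrightarrow> (cpartial i ^^ k) (foldr F xs \<psi>) = \<psi>) \<and>
      (1 \<le> k + S \<longrightarrow> (\<exists>f. good True (int k * \<gamma> $ i + W) (k + S) f \<and>
         (\<forall>a\<in>V. (cpartial i ^^ k) (foldr F xs \<psi>) a = fact k * P * f a)))"
      using False f1(1) eq by (auto simp: add.commute intro!: exI[of _ f1])
  qed
qed

end

theorem theorem3p4:
  fixes \<gamma> :: "int^'d::finite"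
    and g :: "complex \<Rightarrow> complex"
    and \<alpha> :: complex
    and U :: "(complex^'d) set"
    and \<psi> :: "complex^'d \<Rightarrow> complex"
    and n :: "nat^'d"
  assumes g_holo: "g holomorphic_on UNIV"
    and g_zero: "g \<alpha> = 0"
    and alpha_nz: "\<alpha> \<noteq> 0"
    and simple: "deriv g \<alpha> \<noteq> 0"
    and U_open: "open U" and U0: "0 \<in> U"
    and psi_holo: "cholomorphic_on \<psi> U"
    and psi_nz: "\<forall>a\<in>U. \<psi> a \<noteq> 0"
    and psi_eq: "\<forall>a\<in>U. g (\<psi> a) + (\<Sum>i\<in>UNIV. a $ i * \<psi> a powi (\<gamma> $ i)) = 0"
    and psi0: "\<psi> 0 = \<alpha>"
    and n_pos: "(\<Sum>i\<in>UNIV. n $ i) \<ge> 1"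
  shows "\<exists>p \<in> int_poly_vals (\<Sum>i\<in>UNIV. n $ i)
            (\<lambda>j. if j = 0 then inverse \<alpha>
                 else if j = 1 then inverse ((deriv ^^ 1) g \<alpha> / fact 1)
                 else (deriv ^^ j) g \<alpha> / fact j).
           mixed_partial n \<psi> 0 / (\<Prod>i\<in>UNIV. of_nat (fact (n $ i)))
             = \<alpha> powi (\<Sum>i\<in>UNIV. int (n $ i) * \<gamma> $ i) * p"
proof -
  interpret S: setting \<gamma> g \<alpha> U \<psi>
    by unfold_locales (use assms in auto)
  define xs where "xs = (SOME xs. set xs = (UNIV :: 'd set) \<and> distinct xs)"
  have ex: "\<exists>xs. set xs = (UNIV :: 'd set) \<and> distinct xs"
    by (rule finite_distinct_list) simp
  have xs: "set xs = (UNIV :: 'd set)" "distinct xs"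
    using someI_ex[OF ex] unfolding xs_def by auto
  have mp: "mixed_partial n \<psi> = foldr (\<lambda>i h. (cpartial i ^^ (n $ i)) h) xs \<psi>"
    unfolding mixed_partial_def xs_def ..
  obtain f where f: "S.good True (\<Sum>i\<in>UNIV. int (n $ i) * \<gamma> $ i) (\<Sum>i\<in>UNIV. n $ i) f"
    "\<forall>a\<in>S.V. mixed_partial n \<psi> a = (\<Prod>i\<in>UNIV. fact (n $ i)) * f a"
    using S.fold_claim[OF xs(2), of n] n_pos unfolding xs(1) mp by blast
  obtain p where p: "p \<in> int_poly_vals (\<Sum>i\<in>UNIV. n $ i) S.X"
    "f 0 = \<alpha> powi (\<Sum>i\<in>UNIV. int (n $ i) * \<gamma> $ i) * p"
    using S.good_value[OF f(1) order_refl] by blast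
  have "mixed_partial n \<psi> 0 = (\<Prod>i\<in>UNIV. fact (n $ i)) * f 0"
    using f(2) S.V0 by blast
  moreover have "(\<Prod>i\<in>UNIV. of_nat (fact (n $ i))) = (\<Prod>i\<in>UNIV. fact (n $ i) :: complex)"
    by (simp add: of_nat_fact)
  moreover have "(\<Prod>i\<in>UNIV. fact (n $ i) :: complex) \<noteq> 0"
    by (simp add: prod_zero_iff)
  ultimately have "mixed_partial n \<psi> 0 / (\<Prod>i\<in>UNIV. of_nat (fact (n $ i))) = f 0"
    by simp
  moreover have "S.X = (\<lambda>j. if j = 0 then inverse \<alpha>
                 else if j = 1 then inverse ((deriv ^^ 1) g \<alpha> / fact 1)
                 else (deriv ^^ j) g \<alpha> / fact j)"
    by (rule ext) (simp add: S.X_def)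
  ultimately show ?thesis using p by auto
qed

end
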